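(* Let $\bar B>0$, $\gamma>0$, and let $\{E_t\}_{t\ge1}$ be i.i.d. non-negative with $\mathbb{E}[E_t]>0$. Let $\mathbf{g}$ be a policy that is admissible when the initial battery level is $b_1=\bar{B}$. Then for every $\epsilon>0$ there exists a policy $\tilde{\mathbf{g}}$ that is admissible when the initial battery level is $b_1=0$ and satisfies \[ \liminf_{n\to\infty}\mathscr{T}_n(\tilde{\mathbf{g}})\geq \liminf_{n\to\infty}\mathscr{T}_n(\mathbf{g})-\epsilon, \] where the throughput of $\mathbf{g}$ is computed with $b_1=\bar B$ and that of $\tilde{\mathbf{g}}$ with $b_1=0$.
   Context: An online policy $\mathbf{g}=\{g_t\}_{t\ge1}$ is a sequence of maps $g_t$ from $(E_1,\ldots,E_t)$ to $\mathbb{R}_+$. It is admissible for initial battery level $b_1$ if for every realization of the arrivals, $0\le g_t\le b_t$ for all $t\ge1$, where $b_t=\min\{b_{t-1}-g_{t-1}+E_t,\bar{B}\}$ for $t\ge 2$. The $n$-horizon expected throughput is $\mathscr{T}_n(\mathbf{g})=\frac{1}{n}\mathbb{E}\big[\sum_{t=1}^{n}\frac12\log_2(1+\gamma g_t(E_1,\ldots,E_t))\big]$. *)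

theory Defs
  imports "HOL-Probability.Probability"
begin

text \<open>Arrival sequences are functions e :: nat => real, only the values e 1, e 2, ...
  being relevant (time starts at 1).\<close>

definition causal :: "(nat \<Rightarrow> (nat \<Rightarrow> real) \<Rightarrow> real) \<Rightarrow> bool" where
  "causal g \<longleftrightarrow> (\<forall>t\<ge>1. \<forall>e e'. (\<forall>i\<in>{1..t}. e i = e' i) \<longrightarrow> g t e = g t e')"

definition online_policy :: "(nat \<Rightarrow> (nat \<Rightarrow> real) \<Rightarrow> real) \<Rightarrow> bool" where
  "online_policy g \<longleftrightarrow> causal g \<and>
     (\<forall>t\<ge>1. g t \<in> borel_measurable (Pi\<^sub>M UNIV (\<lambda>_::nat. (borel :: real measure))))"

text \<open>Battery level: batt Bb b1 g e k is b_(k+1); so b_1 = b1 and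
  b_(t+1) = min (b_t - g_t + E_(t+1)) Bb.\<close>
primrec batt :: "real \<Rightarrow> real \<Rightarrow> (nat \<Rightarrow> (nat \<Rightarrow> real) \<Rightarrow> real) \<Rightarrow> (nat \<Rightarrow> real) \<Rightarrow> nat \<Rightarrow> real" where
  "batt Bb b1 g e 0 = b1"
| "batt Bb b1 g e (Suc k) = min (batt Bb b1 g e k - g (Suc k) e + e (Suc (Suc k))) Bb"

definition admissible :: "real \<Rightarrow> real \<Rightarrow> (nat \<Rightarrow> (nat \<Rightarrow> real) \<Rightarrow> real) \<Rightarrow> bool" where
  "admissible Bb b1 g \<longleftrightarrow>
     (\<forall>e::nat \<Rightarrow> real. (\<forall>i\<ge>1. 0 \<le> e i) \<longrightarrow>
        (\<forall>t\<ge>1. 0 \<le> g t e \<and> g t e \<le> batt Bb b1 g e (t - 1)))"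

definition throughput :: "'a measure \<Rightarrow> (nat \<Rightarrow> 'a \<Rightarrow> real) \<Rightarrow> real \<Rightarrow>
    (nat \<Rightarrow> (nat \<Rightarrow> real) \<Rightarrow> real) \<Rightarrow> nat \<Rightarrow> real" where
  "throughput M E \<gamma> g n =
     (1 / real n) * (\<integral>\<omega>. (\<Sum>t = 1..n. (1/2) * log 2 (1 + \<gamma> * g t (\<lambda>i. E i \<omega>))) \<partial>M)"

end

theory Submission
  imports Defs
begin


primrec Dft :: "real \<Rightarrow> (nat \<Rightarrow> (nat\<Rightarrow>real) \<Rightarrow> real) \<Rightarrow> (nat\<Rightarrow>real) \<Rightarrow> nat \<Rightarrow> real" where
  "Dft Bb g e 0 = Bb"
| "Dft Bb g e (Suc k) = min (batt Bb Bb g e k - g (Suc k) e + e (Suc (Suc k))) Bb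
     - min (batt Bb Bb g e k - g (Suc k) e - max (Dft Bb g e k - g (Suc k) e) 0 + e (Suc (Suc k))) Bb"

definition gmod :: "real \<Rightarrow> (nat \<Rightarrow> (nat\<Rightarrow>real) \<Rightarrow> real) \<Rightarrow> nat \<Rightarrow> (nat\<Rightarrow>real) \<Rightarrow> real" where
  "gmod Bb g t e = max 0 (g t e - Dft Bb g e (t - 1))"

lemma batt_gmod: "batt Bb 0 (gmod Bb g) e k = batt Bb Bb g e k - Dft Bb g e k"
proof (induction k)
  case 0 then show ?case by simp
next
  case (Suc k)
  show ?case using Suc by (simp add: gmod_def)
qed

lemma Dft_nonneg: "Bb \<ge> 0 \<Longrightarrow> 0 \<le> Dft Bb g e k"
  by (cases k) auto

lemma Dft_step: "Dft Bb g e (Suc k) \<le> Dft Bb g e k - min (Dft Bb g e k) (g (Suc k) e)"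
  by simp

lemma Dft_tele: "(\<Sum>t=1..n. min (Dft Bb g e (t-1)) (g t e)) \<le> Bb - Dft Bb g e n"
proof (induction n)
  case 0 then show ?case by simp
next
  case (Suc n)
  have "(\<Sum>t=1..Suc n. min (Dft Bb g e (t-1)) (g t e)) = (\<Sum>t=1..n. min (Dft Bb g e (t-1)) (g t e)) + min (Dft Bb g e n) (g (Suc n) e)"
    by simp
  also have "\<dots> \<le> Bb - Dft Bb g e (Suc n)" using Suc Dft_step[of Bb g e n] by linarith
  finally show ?case .
qed

lemma g_nonneg:
  assumes "admissible Bb Bb g" "\<forall>i\<ge>1. 0 \<le> e i" "t \<ge> 1"
  shows "0 \<le> g t e" "g t e \<le> batt Bb Bb g e (t-1)"
  using assms unfolding admissible_def by auto

lemma gmod_adm: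
  assumes "admissible Bb Bb g" "Bb > 0"
  shows "admissible Bb 0 (gmod Bb g)"
  unfolding admissible_def
proof (intro allI impI conjI)
  fix e :: "nat \<Rightarrow> real" assume e: "\<forall>i\<ge>1. 0 \<le> e i"
  have nn: "0 \<le> batt Bb 0 (gmod Bb g) e k" for k
  proof (induction k)
    case 0 then show ?case by simp
  next
    case (Suc k)
    have "g (Suc k) e \<le> batt Bb Bb g e k" using g_nonneg(2)[OF assms(1) e, of "Suc k"] by simp
    then have "gmod Bb g (Suc k) e \<le> batt Bb 0 (gmod Bb g) e k"
      using Suc.IH batt_gmod[of Bb g e k] unfolding gmod_def by simp
    moreover have "0 \<le> e (Suc (Suc k))" using e by simp
    ultimately show ?case using assms(2) by simp
  qed
  fix t :: nat assume t: "1 \<le> t"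
  show "0 \<le> gmod Bb g t e" by (simp add: gmod_def)
  have "g t e \<le> batt Bb Bb g e (t-1)" using g_nonneg(2)[OF assms(1) e t] .
  then show "gmod Bb g t e \<le> batt Bb 0 (gmod Bb g) e (t - 1)"
    using nn[of "t-1"] batt_gmod[of Bb g e "t-1"] by (simp add: gmod_def)
qed

lemma log_loss:
  fixes \<gamma> g d :: real
  assumes "\<gamma> > 0" "g \<ge> 0" "d \<ge> 0"
  shows "log 2 (1 + \<gamma> * g) - log 2 (1 + \<gamma> * max 0 (g - d)) \<le> \<gamma> * min d g / ln 2"
proof -
  define c where "c = min d g"
  define h where "h = g - c"
  have h: "h \<ge> 0" "c \<ge> 0" "max 0 (g - d) = h" using assms by (auto simp: c_def h_def)
  have gh: "g = h + c" by (simp add: h_def)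
  have p: "1 + \<gamma> * h > 0" using h assms by (simp add: add_pos_nonneg)
  have gc: "\<gamma> * c \<ge> 0" "\<gamma> * h \<ge> 0" using h assms by auto
  have pg: "1 + \<gamma> * g > 0" using assms by (simp add: add_pos_nonneg)
  have "ln (1 + \<gamma> * g) - ln (1 + \<gamma> * h) = ln ((1 + \<gamma> * g) / (1 + \<gamma> * h))"
    using p pg by (simp add: ln_div)
  also have "\<dots> \<le> (1 + \<gamma> * g) / (1 + \<gamma> * h) - 1"
    by (rule ln_le_minus_one) (use p pg in simp)
  also have "\<dots> = \<gamma> * c / (1 + \<gamma> * h)" using p by (simp add: field_simps gh)
  also have "\<dots> \<le> \<gamma> * c / 1"
    by (rule divide_left_mono) (use gc p in auto)
  finally have "ln (1 + \<gamma> * g) - ln (1 + \<gamma> * h) \<le> \<gamma> * c" by simp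
  then show ?thesis using h by (simp add: log_def c_def[symmetric] diff_divide_distrib[symmetric] divide_right_mono)
qed


abbreviation "PM \<equiv> Pi\<^sub>M UNIV (\<lambda>_::nat. (borel :: real measure))"

lemma batt_causal:
  assumes "causal g" "\<forall>i\<in>{1..Suc k}. e i = e' i"
  shows "batt Bb b g e k = batt Bb b g e' k"
  using assms(2)
proof (induction k)
  case 0 then show ?case by simp
next
  case (Suc k)
  have "g (Suc k) e = g (Suc k) e'" using assms(1) Suc.prems unfolding causal_def
    by (metis atLeastAtMost_iff le_SucI le_add1 plus_1_eq_Suc)
  then show ?case using Suc by simp
qed

lemma Dft_causal:
  assumes "causal g" "\<forall>i\<in>{1..Suc k}. e i = e' i"
  shows "Dft Bb g e k = Dft Bb g e' k"
  using assms(2)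
proof (induction k)
  case 0 then show ?case by simp
next
  case (Suc k)
  have "g (Suc k) e = g (Suc k) e'" using assms(1) Suc.prems unfolding causal_def
    by (metis atLeastAtMost_iff le_SucI le_add1 plus_1_eq_Suc)
  moreover have "batt Bb Bb g e k = batt Bb Bb g e' k" using batt_causal[OF assms(1)] Suc.prems by simp
  ultimately show ?case using Suc by simp
qed

lemma gmod_causal: "causal g \<Longrightarrow> causal (gmod Bb g)"
  unfolding causal_def[of "gmod Bb g"]
proof (intro allI impI)
  fix t e e' assume c: "causal g" and t: "1 \<le> t" and ee: "\<forall>i\<in>{1..t}. e i = (e' :: nat \<Rightarrow> real) i"
  have "g t e = g t e'" using c t ee unfolding causal_def by blast
  moreover have "Dft Bb g e (t-1) = Dft Bb g e' (t-1)" using Dft_causal[OF c] ee t by simp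
  ultimately show "gmod Bb g t e = gmod Bb g t e'" by (simp add: gmod_def)
qed

lemma comp_meas: "(\<lambda>e. e i) \<in> borel_measurable PM"
  by (rule measurable_component_singleton) simp

lemma batt_meas:
  assumes "online_policy g"
  shows "(\<lambda>e. batt Bb b g e k) \<in> borel_measurable PM"
proof (induction k)
  case 0 then show ?case by simp
next
  case (Suc k)
  have "g (Suc k) \<in> borel_measurable PM" using assms unfolding online_policy_def by simp
  then show ?case using Suc comp_meas by simp
qed

lemma Dft_meas:
  assumes "online_policy g"
  shows "(\<lambda>e. Dft Bb g e k) \<in> borel_measurable PM"
proof (induction k)
  case 0 then show ?case by simp
next
  case (Suc k)
  have "g (Suc k) \<in> borel_measurable PM" using assms unfolding online_policy_def by simp
  then show ?case using Suc comp_meas batt_meas[OF assms] by simp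
qed

lemma gmod_online: "online_policy g \<Longrightarrow> online_policy (gmod Bb g)"
  unfolding online_policy_def[of "gmod Bb g"]
proof (intro conjI allI impI)
  assume g: "online_policy g"
  then show "causal (gmod Bb g)" using gmod_causal online_policy_def by blast
  fix t :: nat assume "1 \<le> t"
  then have "g t \<in> borel_measurable PM" using g unfolding online_policy_def by simp
  then show "gmod Bb g t \<in> borel_measurable PM"
    unfolding gmod_def[abs_def] using Dft_meas[OF g] by simp
qed

lemma path_bound:
  fixes \<gamma> Bb :: real
  assumes "\<gamma> > 0" "Bb \<ge> 0" "\<forall>t\<in>{1..n}. 0 \<le> g t e"
  shows "(\<Sum>t=1..n. (1/2) * log 2 (1 + \<gamma> * g t e)) - \<gamma> * Bb / (2 * ln 2)
           \<le> (\<Sum>t=1..n. (1/2) * log 2 (1 + \<gamma> * gmod Bb g t e))"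
    and "(\<Sum>t=1..n. (1/2) * log 2 (1 + \<gamma> * gmod Bb g t e)) \<le> (\<Sum>t=1..n. (1/2) * log 2 (1 + \<gamma> * g t e))"
    and "0 \<le> (\<Sum>t=1..n. (1/2) * log 2 (1 + \<gamma> * gmod Bb g t e))"
proof -
  have l: "(1/2) * log 2 (1 + \<gamma> * g t e) - (1/2) * log 2 (1 + \<gamma> * gmod Bb g t e)
      \<le> \<gamma> / (2 * ln 2) * min (Dft Bb g e (t-1)) (g t e)" if "t \<in> {1..n}" for t
    using log_loss[OF assms(1), of "g t e" "Dft Bb g e (t-1)"] assms(3) that Dft_nonneg[OF assms(2)]
    by (simp add: gmod_def field_simps)
  have "(\<Sum>t=1..n. (1/2) * log 2 (1 + \<gamma> * g t e)) - (\<Sum>t=1..n. (1/2) * log 2 (1 + \<gamma> * gmod Bb g t e))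
      = (\<Sum>t=1..n. (1/2) * log 2 (1 + \<gamma> * g t e) - (1/2) * log 2 (1 + \<gamma> * gmod Bb g t e))"
    by (simp add: sum_subtractf)
  also have "\<dots> \<le> (\<Sum>t=1..n. \<gamma> / (2 * ln 2) * min (Dft Bb g e (t-1)) (g t e))"
    by (rule sum_mono) (rule l)
  also have "\<dots> = \<gamma> / (2 * ln 2) * (\<Sum>t=1..n. min (Dft Bb g e (t-1)) (g t e))"
    by (simp add: sum_distrib_left)
  also have "\<dots> \<le> \<gamma> / (2 * ln 2) * Bb"
    using Dft_tele[of Bb g e n] Dft_nonneg[OF assms(2), of g e n] assms(1)
    by (intro mult_left_mono) auto
  finally show "(\<Sum>t=1..n. (1/2) * log 2 (1 + \<gamma> * g t e)) - \<gamma> * Bb / (2 * ln 2)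
           \<le> (\<Sum>t=1..n. (1/2) * log 2 (1 + \<gamma> * gmod Bb g t e))" by simp
  show "(\<Sum>t=1..n. (1/2) * log 2 (1 + \<gamma> * gmod Bb g t e)) \<le> (\<Sum>t=1..n. (1/2) * log 2 (1 + \<gamma> * g t e))"
  proof (rule sum_mono)
    fix t assume t: "t \<in> {1..n}"
    have "gmod Bb g t e \<le> g t e" using assms(3) t Dft_nonneg[OF assms(2)] by (auto simp: gmod_def)
    moreover have "0 \<le> gmod Bb g t e" by (simp add: gmod_def)
    ultimately show "(1/2) * log 2 (1 + \<gamma> * gmod Bb g t e) \<le> (1/2) * log 2 (1 + \<gamma> * g t e)"
      using assms(1) by (simp add: add_pos_nonneg)
  qed
  show "0 \<le> (\<Sum>t=1..n. (1/2) * log 2 (1 + \<gamma> * gmod Bb g t e))"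
  proof (rule sum_nonneg)
    fix t assume "t \<in> {1..n}"
    have "0 \<le> gmod Bb g t e" by (simp add: gmod_def)
    then have "1 \<le> 1 + \<gamma> * gmod Bb g t e" using assms(1) by simp
    then show "0 \<le> (1/2) * log 2 (1 + \<gamma> * gmod Bb g t e)" by simp
  qed
qed


lemma Ehat_meas:
  assumes "\<And>t. t \<ge> 1 \<Longrightarrow> E t \<in> borel_measurable M"
  shows "(\<lambda>\<omega> i. if i = 0 then 0 else E i \<omega>) \<in> measurable M PM"
proof (rule measurable_PiM_single'[where f = "\<lambda>i \<omega>. if i = 0 then 0 else E i \<omega>"])
  fix i :: nat
  show "(\<lambda>\<omega>. if i = 0 then 0 else E i \<omega>) \<in> borel_measurable M" using assms[of i] by (cases i) auto
qed auto

lemma S_meas: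
  assumes "\<And>t. t \<ge> 1 \<Longrightarrow> E t \<in> borel_measurable M" "online_policy h"
  shows "(\<lambda>\<omega>. \<Sum>t=1..n. (1/2) * log 2 (1 + \<gamma> * h t (\<lambda>i. E i \<omega>))) \<in> borel_measurable M"
proof -
  have eq: "h t (\<lambda>i. E i \<omega>) = h t (\<lambda>i. if i = 0 then 0 else E i \<omega>)" if "t \<in> {1..n}" for t \<omega>
    using assms(2) that unfolding online_policy_def causal_def by auto
  have m: "(\<lambda>\<omega>. h t (\<lambda>i. if i = 0 then 0 else E i \<omega>)) \<in> borel_measurable M" if "t \<in> {1..n}" for t
    by (rule measurable_compose[OF Ehat_meas[OF assms(1)]]) (use assms(2) that in \<open>auto simp: online_policy_def\<close>)
  have "(\<lambda>\<omega>. \<Sum>t=1..n. (1/2) * log 2 (1 + \<gamma> * h t (\<lambda>i. if i = 0 then 0 else E i \<omega>))) \<in> borel_measurable M"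
    using m by (intro borel_measurable_sum) auto
  moreover have "(\<lambda>\<omega>. \<Sum>t=1..n. (1/2) * log 2 (1 + \<gamma> * h t (\<lambda>i. E i \<omega>)))
      = (\<lambda>\<omega>. \<Sum>t=1..n. (1/2) * log 2 (1 + \<gamma> * h t (\<lambda>i. if i = 0 then 0 else E i \<omega>)))"
    using eq by (intro ext sum.cong) auto
  ultimately show ?thesis by simp
qed

lemma gmod_S_nonneg:
  assumes "\<gamma> > 0"
  shows "0 \<le> (\<Sum>t=1..n. (1/2) * log 2 (1 + \<gamma> * gmod Bb g t e))"
proof (rule sum_nonneg)
  fix t assume "t \<in> {1..n}"
  have "0 \<le> gmod Bb g t e" by (simp add: gmod_def)
  then have "1 \<le> 1 + \<gamma> * gmod Bb g t e" using assms(1) by simp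
  then show "0 \<le> (1/2) * log 2 (1 + \<gamma> * gmod Bb g t e)" by simp
qed

lemma thr_bound:
  assumes P: "prob_space M" and "Bb > 0" and "\<gamma> > 0"
    and Em: "\<And>t. t \<ge> 1 \<Longrightarrow> E t \<in> borel_measurable M"
    and nn: "\<And>t. t \<ge> 1 \<Longrightarrow> AE \<omega> in M. 0 \<le> E t \<omega>"
    and g: "online_policy g" and adm: "admissible Bb Bb g"
  shows "throughput M E \<gamma> g n - (\<gamma> * Bb / (2 * ln 2)) / real n \<le> throughput M E \<gamma> (gmod Bb g) n"
proof -
  interpret prob_space M by (rule P)
  define C where "C = \<gamma> * Bb / (2 * ln 2)"
  define f where "f = (\<lambda>\<omega>. \<Sum>t=1..n. (1/2) * log 2 (1 + \<gamma> * g t (\<lambda>i. E i \<omega>)))"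
  define f' where "f' = (\<lambda>\<omega>. \<Sum>t=1..n. (1/2) * log 2 (1 + \<gamma> * gmod Bb g t (\<lambda>i. E i \<omega>)))"
  have fm: "f \<in> borel_measurable M" unfolding f_def by (rule S_meas[OF Em g])
  have fm': "f' \<in> borel_measurable M" unfolding f'_def by (rule S_meas[OF Em gmod_online[OF g]])
  have "AE \<omega> in M. \<forall>i::nat. i \<ge> 1 \<longrightarrow> 0 \<le> E i \<omega>"
    unfolding AE_all_countable using nn by (auto intro: AE_I2)
  then have AEb: "AE \<omega> in M. f \<omega> - C \<le> f' \<omega> \<and> f' \<omega> \<le> f \<omega>"
  proof (rule AE_mp, intro AE_I2 impI)
    fix \<omega> assume "\<forall>i::nat. i \<ge> 1 \<longrightarrow> 0 \<le> E i \<omega>"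
    then have "\<forall>t\<in>{1..n}. 0 \<le> g t (\<lambda>i. E i \<omega>)" using g_nonneg(1)[OF adm] by auto
    moreover have "0 \<le> Bb" using assms(2) by simp
    ultimately show "f \<omega> - C \<le> f' \<omega> \<and> f' \<omega> \<le> f \<omega>" unfolding f_def f'_def C_def using path_bound[OF assms(3)] by blast
  qed
  have f'0: "0 \<le> f' \<omega>" for \<omega>
    unfolding f'_def by (rule gmod_S_nonneg[OF assms(3)])
  have key: "integral\<^sup>L M f - C \<le> integral\<^sup>L M f'"
  proof (cases "integrable M f")
    case True
    have i': "integrable M f'"
      by (rule Bochner_Integration.integrable_bound[OF True fm']) (use AEb f'0 in \<open>elim AE_mp, intro AE_I2 impI, force\<close>)
    have "integral\<^sup>L M f - C = integral\<^sup>L M (\<lambda>\<omega>. f \<omega> - C)"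
      using True by (simp add: prob_space)
    also have "\<dots> \<le> integral\<^sup>L M f'"
      by (rule integral_mono_AE) (use True i' AEb in \<open>auto elim!: AE_mp intro!: AE_I2\<close>)
    finally show ?thesis .
  next
    case False
    then have "integral\<^sup>L M f = 0" by (rule not_integrable_integral_eq)
    moreover have "0 \<le> integral\<^sup>L M f'" using f'0 by (simp add: Bochner_Integration.integral_nonneg)
    moreover have "0 \<le> C" unfolding C_def using assms(2,3) by simp
    ultimately show ?thesis by simp
  qed
  have "throughput M E \<gamma> g n - C / real n = (1 / real n) * (integral\<^sup>L M f - C)"
    unfolding throughput_def f_def by (simp add: right_diff_distrib)
  also have "\<dots> \<le> (1 / real n) * integral\<^sup>L M f'"
    using key by (intro mult_left_mono) auto
  also have "\<dots> = throughput M E \<gamma> (gmod Bb g) n" unfolding throughput_def f'_def by simp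
  finally show ?thesis unfolding C_def .
qed

theorem proposition6:
  fixes M :: "'a measure" and E :: "nat \<Rightarrow> 'a \<Rightarrow> real"
    and Bb \<gamma> \<epsilon> :: real and g :: "nat \<Rightarrow> (nat \<Rightarrow> real) \<Rightarrow> real"
  assumes "prob_space M"
    and "Bb > 0" and "\<gamma> > 0"
    and "\<And>t. t \<ge> 1 \<Longrightarrow> E t \<in> borel_measurable M"
    and "prob_space.indep_vars M (\<lambda>_. borel) E {1..}"
    and "\<And>t. t \<ge> 1 \<Longrightarrow> distr M borel (E t) = distr M borel (E 1)"
    and "\<And>t. t \<ge> 1 \<Longrightarrow> AE \<omega> in M. 0 \<le> E t \<omega>"
    and "(\<integral>\<^sup>+ \<omega>. ennreal (E 1 \<omega>) \<partial>M) > 0"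
    and "online_policy g" and "admissible Bb Bb g"
    and "\<epsilon> > 0"
  shows "\<exists>g'. online_policy g' \<and> admissible Bb 0 g' \<and>
           liminf (\<lambda>n. ereal (throughput M E \<gamma> g' n))
             \<ge> liminf (\<lambda>n. ereal (throughput M E \<gamma> g n)) - ereal \<epsilon>"
proof (intro exI conjI)
  show "online_policy (gmod Bb g)" by (rule gmod_online) (rule assms(9))
  show "admissible Bb 0 (gmod Bb g)" by (rule gmod_adm[OF assms(10) assms(2)])
  define C where "C = \<gamma> * Bb / (2 * ln 2)"
  have C0: "0 \<le> C" unfolding C_def using assms(2,3) by simp
  have ev: "eventually (\<lambda>n. ereal (throughput M E \<gamma> g n) + ereal (- \<epsilon>) \<le> ereal (throughput M E \<gamma> (gmod Bb g) n)) sequentially"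
  proof (rule eventually_sequentiallyI[of "nat \<lceil>C / \<epsilon>\<rceil> + 1"])
    fix n assume n: "nat \<lceil>C / \<epsilon>\<rceil> + 1 \<le> n"
    then have n1: "real n > 0" by simp
    have "C / \<epsilon> \<le> real n" using n by linarith
    then have "C \<le> \<epsilon> * real n" using assms(11) by (simp add: divide_le_eq mult.commute)
    then have ce: "C / real n \<le> \<epsilon>" using n1 by (simp add: divide_le_eq)
    have "throughput M E \<gamma> g n - C / real n \<le> throughput M E \<gamma> (gmod Bb g) n"
      unfolding C_def by (rule thr_bound[OF assms(1,2,3,4,7,9,10)])
    then show "ereal (throughput M E \<gamma> g n) + ereal (- \<epsilon>) \<le> ereal (throughput M E \<gamma> (gmod Bb g) n)"
      using ce by simp
  qed
  have "liminf (\<lambda>n. ereal (throughput M E \<gamma> g n)) - ereal \<epsilon>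
      = liminf (\<lambda>n. ereal (throughput M E \<gamma> g n)) + ereal (- \<epsilon>)" by (simp add: minus_ereal_def)
  also have "\<dots> = liminf (\<lambda>n. ereal (throughput M E \<gamma> g n) + ereal (- \<epsilon>))"
    by (rule Liminf_add_ereal_right[symmetric]) simp_all
  also have "\<dots> \<le> liminf (\<lambda>n. ereal (throughput M E \<gamma> (gmod Bb g) n))"
    by (rule Liminf_mono[OF ev])
  finally show "liminf (\<lambda>n. ereal (throughput M E \<gamma> (gmod Bb g) n))
             \<ge> liminf (\<lambda>n. ereal (throughput M E \<gamma> g n)) - ereal \<epsilon>" .
qed

end
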